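(* Let $k,n\ge1$, let $M=\Gamma(\mathbb Z\,\overrightarrow{\times}\,G,(k,0))$ with $G$ a Dedekind $\sigma$-complete $\ell$-group (a $\mathrm{Rad}$-Dedekind $\sigma$-complete $k$-perfect MV-algebra), let $x$ be an $n$-dimensional observable on $M$ and $F=F_x$. Let $i$ be the least integer in $\{1,\ldots,k\}$ such that $T_i\neq\emptyset$. Then $T_i$ has only finitely many characteristic points.
   Context: $\mathbb Z\,\overrightarrow{\times}\,G$ is $\mathbb Z\times G$ with lexicographic order ($(a,g)\le(b,h)$ iff $a<b$ or ($a=b$ and $g\le h$)); $\Gamma(K,v)=([0,v];\oplus,',0,v)$ with $a\oplus b=(a+b)\wedge v$, $a'=v-a$. Partial addition on $M$: $a+b$ defined iff the group sum is $\le(k,0)$. Summable sequence: every finite subfamily has a sum in $M$; its sum is the supremum of finite partial sums. An $n$-dimensional observable is $x:\mathcal B(\mathbb R^n)\to M$ with $x(\mathbb R^n)=1$ and, for pairwise disjoint Borel $A_m$, $(x(A_m))_m$ summable with $x(\bigcup A_m)=\sum_m x(A_m)$. $F_x(s_1,\ldots,s_n)=x((-\infty,s_1)\times\cdots\times(-\infty,s_n))$. For $j=0,\ldots,k$, $M_j=\{(j,g)\in M\}$ and $T_j=\{\mathbf s\in\mathbb R^n\colon F(\mathbf s)\in M_j\}$. For $i\ge1$ and $\mathbf s=(s_1,\ldots,s_n)\in T_i$, $\pi^i_j(\mathbf s)=\inf\{r\in\mathbb R\colon(s_1,\ldots,s_{j-1},r,s_{j+1},\ldots,s_n)\in T_i\}$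 and $\pi_i(\mathbf s)=(\pi^i_1(\mathbf s),\ldots,\pi^i_n(\mathbf s))$; the characteristic points of $T_i$ are the points $\pi_i(\mathbf s)$, $\mathbf s\in T_i$. *)

theory Defs
  imports "HOL-Analysis.Analysis" "HOL-Library.Lattice_Algebras"
begin

definition dedekind_sigma_complete :: "'g::lattice_ab_group_add itself \<Rightarrow> bool" where
  "dedekind_sigma_complete _ \<longleftrightarrow>
     (\<forall>f::nat \<Rightarrow> 'g. bdd_above (range f) \<longrightarrow>
        (\<exists>s. (\<forall>m. f m \<le> s) \<and> (\<forall>u. (\<forall>m. f m \<le> u) \<longrightarrow> s \<le> u)))"

definition lexle :: "int \<times> 'g::lattice_ab_group_add \<Rightarrow> int \<times> 'g \<Rightarrow> bool" where
  "lexle p q \<longleftrightarrow> fst p < fst q \<or> (fst p = fst q \<and> snd p \<le> snd q)"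

text \<open>Carrier of M = Gamma(Z lex G, (k,0)).\<close>
definition inM :: "int \<Rightarrow> int \<times> 'g::lattice_ab_group_add \<Rightarrow> bool" where
  "inM k p \<longleftrightarrow> lexle (0, 0) p \<and> lexle p (k, 0)"

definition gsum :: "('a \<Rightarrow> int \<times> 'g::lattice_ab_group_add) \<Rightarrow> 'a set \<Rightarrow> int \<times> 'g" where
  "gsum f S = ((\<Sum>m\<in>S. fst (f m)), (\<Sum>m\<in>S. snd (f m)))"

definition lub_M :: "int \<Rightarrow> (int \<times> 'g::lattice_ab_group_add) set \<Rightarrow> int \<times> 'g \<Rightarrow> bool" where
  "lub_M k S s \<longleftrightarrow> inM k s \<and> (\<forall>t\<in>S. lexle t s) \<and>
     (\<forall>u. inM k u \<and> (\<forall>t\<in>S. lexle t u) \<longrightarrow> lexle s u)"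

text \<open>Summable sequence in M: every finite subfamily has a sum in M
 (partial addition defined iff the group sum is at most (k,0)).\<close>
definition summable_M :: "int \<Rightarrow> (nat \<Rightarrow> int \<times> 'g::lattice_ab_group_add) \<Rightarrow> bool" where
  "summable_M k a \<longleftrightarrow> (\<forall>F. finite F \<longrightarrow> inM k (gsum a F))"

text \<open>n-dimensional observable on M (only its values on Borel sets matter).\<close>
definition observable ::
  "int \<Rightarrow> ((real^'n) set \<Rightarrow> int \<times> 'g::lattice_ab_group_add) \<Rightarrow> bool" where
  "observable k x \<longleftrightarrow>
     (\<forall>A\<in>sets (borel :: (real^'n) measure). inM k (x A)) \<and>
     x UNIV = (k, 0) \<and>
     (\<forall>A::nat \<Rightarrow> (real^'n) set. (\<forall>m. A m \<in> sets borel) \<longrightarrow> disjoint_family A \<longrightarrow>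
        summable_M k (\<lambda>m. x (A m)) \<and>
        lub_M k {gsum (\<lambda>m. x (A m)) F | F. finite F} (x (\<Union>m. A m)))"

definition distr_fun :: "((real^'n) set \<Rightarrow> 'b) \<Rightarrow> real^'n \<Rightarrow> 'b" where
  "distr_fun x s = x {y. \<forall>j. y $ j < s $ j}"

text \<open>T_j = {s. F(s) in M_j}.\<close>
definition Tset :: "((real^'n) set \<Rightarrow> int \<times> 'g) \<Rightarrow> int \<Rightarrow> (real^'n) set" where
  "Tset x j = {s. fst (distr_fun x s) = j}"

definition char_proj :: "((real^'n) set \<Rightarrow> int \<times> 'g) \<Rightarrow> int \<Rightarrow> real^'n \<Rightarrow> ereal^'n" where
  "char_proj x i s = (\<chi> j. Inf (ereal ` {r. (\<chi> l. if l = j then r else s $ l) \<in> Tset x i}))"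

definition char_points :: "((real^'n) set \<Rightarrow> int \<times> 'g) \<Rightarrow> int \<Rightarrow> (ereal^'n) set" where
  "char_points x i = char_proj x i ` Tset x i"

end

theory Submission
  imports Defs
begin



lemma lexle_fst: "lexle p q \<Longrightarrow> fst p \<le> fst q"
  unfolding lexle_def by auto

lemma inM_fst: "inM k p \<Longrightarrow> 0 \<le> fst p \<and> fst p \<le> k"
  unfolding inM_def lexle_def by auto

lemma obs_inM:
  assumes "observable k x" "A \<in> sets borel"
  shows "inM k (x A)"
  using assms unfolding observable_def by blast

lemma obs_range:
  assumes "observable k x" "A \<in> sets borel"
  shows "0 \<le> fst (x A) \<and> fst (x A) \<le> k"
  using assms inM_fst unfolding observable_def by blast

lemma obsD:
  fixes x :: "(real^'n::finite) set \<Rightarrow> int \<times> 'g::lattice_ab_group_add"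
  assumes "observable k x" "\<forall>m. A m \<in> sets borel" "disjoint_family A"
  shows "summable_M k (\<lambda>m. x (A m)) \<and> lub_M k {gsum (\<lambda>m. x (A m)) F | F. finite F} (x (\<Union>m. A m))"
  using assms unfolding observable_def by blast

lemma lub_ub: "lub_M k S s \<Longrightarrow> t \<in> S \<Longrightarrow> lexle t s"
  unfolding lub_M_def by blast

lemma lub_least: "lub_M k S s \<Longrightarrow> inM k u \<Longrightarrow> (\<And>t. t \<in> S \<Longrightarrow> lexle t u) \<Longrightarrow> lexle s u"
  unfolding lub_M_def by blast

lemma obs_empty:
  fixes x :: "(real^'n::finite) set \<Rightarrow> int \<times> 'g::lattice_ab_group_add"
  assumes "observable k x"
  shows "x {} = (0, 0)"
proof -
  obtain a g where xe: "x {} = (a, g)" by (cases "x {}")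
  have "inM k (x {})" using obs_inM[OF assms] by simp
  hence a0: "a \<ge> 0" and g0: "a = 0 \<longrightarrow> 0 \<le> g" using xe unfolding inM_def lexle_def by auto
  define A0 where "A0 = (\<lambda>_::nat. {}::(real^'n) set)"
  have b: "\<forall>m. A0 m \<in> sets borel" unfolding A0_def by simp
  have d: "disjoint_family A0" unfolding A0_def disjoint_family_on_def by simp
  have U: "(\<Union>m. A0 m) = {}" unfolding A0_def by simp
  have "lub_M k {gsum (\<lambda>m. x (A0 m)) F | F. finite F} (x (\<Union>m. A0 m))"
    using obsD[OF assms b d] by (rule conjunct2)
  hence L: "lub_M k {gsum (\<lambda>m. x (A0 m)) F | F. finite F} (x {})" unfolding U .
  have "gsum (\<lambda>m. x (A0 m)) {0::nat,1} \<in> {gsum (\<lambda>m. x (A0 m)) F | F. finite F}" by blast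
  from lub_ub[OF L this] have "lexle (gsum (\<lambda>m. x (A0 m)) {0::nat,1}) (x {})" .
  hence "lexle (a + a, g + g) (a, g)" using xe unfolding A0_def by (simp add: gsum_def)
  hence "a = 0" "g + g \<le> g" using a0 unfolding lexle_def by auto
  hence "g \<le> 0" by (metis add_le_same_cancel2)
  with g0 \<open>a = 0\<close> have "g = 0" by auto
  thus ?thesis using xe \<open>a = 0\<close> by simp
qed

lemma lexle_add: "lexle (0,0) q \<Longrightarrow> lexle p (fst p + fst q, snd p + snd q)"
  unfolding lexle_def by auto

lemma lexle_refl: "lexle p p" unfolding lexle_def by auto

lemma obs_add:
  fixes x :: "(real^'n::finite) set \<Rightarrow> int \<times> 'g::lattice_ab_group_add"
  assumes obs: "observable k x" and AB: "A \<in> sets borel" "B \<in> sets borel" "A \<inter> B = {}"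
  shows "fst (x (A \<union> B)) = fst (x A) + fst (x B)"
proof -
  define C where "C = (\<lambda>m::nat. if m = 0 then A else if m = 1 then B else {})"
  have Cb: "\<forall>m. C m \<in> sets borel" using AB unfolding C_def by auto
  have Cd: "disjoint_family C" using AB unfolding C_def disjoint_family_on_def by auto
  have C0: "C 0 = A" and C1: "C 1 = B" unfolding C_def by auto
  have UC: "(\<Union>m. C m) = A \<union> B"
  proof (intro equalityI subsetI)
    fix y assume "y \<in> (\<Union>m. C m)"
    then obtain m where "y \<in> C m" by blast
    thus "y \<in> A \<union> B" unfolding C_def by (cases "m = 0"; cases "m = 1") auto
  next
    fix y assume "y \<in> A \<union> B"
    thus "y \<in> (\<Union>m. C m)" using C0 C1 by blast
  qed
  have sm: "summable_M k (\<lambda>m. x (C m))" and lub0: "lub_M k {gsum (\<lambda>m. x (C m)) F | F. finite F} (x (\<Union>m. C m))"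
    using obsD[OF obs Cb Cd] by auto
  have lub: "lub_M k {gsum (\<lambda>m. x (C m)) F | F. finite F} (x (A \<union> B))" using lub0 UC by simp
  have xe: "x {} = (0,0)" using obs_empty[OF obs] .
  have gs: "gsum (\<lambda>m. x (C m)) F = gsum (\<lambda>m. x (C m)) (F \<inter> {0,1})" if "finite F" for F
  proof -
    have z: "x (C m) = (0,0)" if "m \<notin> {0,1}" for m using that xe unfolding C_def by auto
    have "(\<Sum>m\<in>F. fst (x (C m))) = (\<Sum>m\<in>F \<inter> {0,1}. fst (x (C m)))"
      by (rule sum.mono_neutral_right) (use \<open>finite F\<close> z in auto)
    moreover have "(\<Sum>m\<in>F. snd (x (C m))) = (\<Sum>m\<in>F \<inter> {0,1}. snd (x (C m)))"
      by (rule sum.mono_neutral_right) (use \<open>finite F\<close> z in auto)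
    ultimately show ?thesis unfolding gsum_def by simp
  qed
  define u where "u = gsum (\<lambda>m. x (C m)) {0,1}"
  have u: "u = (fst (x A) + fst (x B), snd (x A) + snd (x B))"
    unfolding u_def gsum_def C_def by simp
  have uM: "inM k u" using sm unfolding summable_M_def u_def by auto
  have iA: "inM k (x A)" and iB: "inM k (x B)" using obs AB unfolding observable_def by auto
  have A0: "lexle (0,0) (x A)" and B0: "lexle (0,0) (x B)" using iA iB unfolding inM_def by auto
  have ub: "lexle (gsum (\<lambda>m. x (C m)) F) u" if "finite F" for F
  proof -
    have D: "F \<inter> {0,1} = {} \<or> F \<inter> {0,1} = {0} \<or> F \<inter> {0,1} = {1} \<or> F \<inter> {0,1} = {0,1}" by auto
    have e: "gsum (\<lambda>m. x (C m)) F = gsum (\<lambda>m. x (C m)) (F \<inter> {0,1})" by (rule gs[OF that])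
    have "lexle (gsum (\<lambda>m. x (C m)) {}) u"
      using A0 B0 unfolding u gsum_def lexle_def by (auto simp: add_nonneg_nonneg)
    moreover have "lexle (gsum (\<lambda>m. x (C m)) {0}) u"
      using lexle_add[OF B0, of "x A"] unfolding u gsum_def C_def by simp
    moreover have "lexle (gsum (\<lambda>m. x (C m)) {1}) u"
      using lexle_add[OF A0, of "x B"] unfolding u gsum_def C_def by (simp add: add.commute)
    moreover have "lexle (gsum (\<lambda>m. x (C m)) {0,1}) u" unfolding u_def by (rule lexle_refl)
    ultimately show ?thesis using D e by metis
  qed
  define SS where "SS = {gsum (\<lambda>m. x (C m)) F | F. finite F}"
  have L1: "\<forall>v. inM k v \<and> (\<forall>t\<in>SS. lexle t v) \<longrightarrow> lexle (x (A \<union> B)) v"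
    and L2: "\<forall>t\<in>SS. lexle t (x (A \<union> B))"
  proof -
    have "inM k (x (A \<union> B)) \<and> (\<forall>t\<in>SS. lexle t (x (A \<union> B))) \<and>
     (\<forall>v. inM k v \<and> (\<forall>t\<in>SS. lexle t v) \<longrightarrow> lexle (x (A \<union> B)) v)"
      using lub unfolding lub_M_def SS_def .
    thus "\<forall>v. inM k v \<and> (\<forall>t\<in>SS. lexle t v) \<longrightarrow> lexle (x (A \<union> B)) v"
      and "\<forall>t\<in>SS. lexle t (x (A \<union> B))" by blast+
  qed
  have "\<forall>t\<in>SS. lexle t u" using ub unfolding SS_def by auto
  hence "lexle (x (A \<union> B)) u" using L1 uM by blast
  moreover have "u \<in> SS" unfolding u_def SS_def by blast
  hence "lexle u (x (A \<union> B))" using L2 by blast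
  ultimately have "fst (x (A \<union> B)) \<le> fst u" "fst u \<le> fst (x (A \<union> B))" using lexle_fst by blast+
  thus ?thesis using u by simp
qed

lemma obs_mono:
  fixes x :: "(real^'n::finite) set \<Rightarrow> int \<times> 'g::lattice_ab_group_add"
  assumes obs: "observable k x" and "A \<in> sets borel" "B \<in> sets borel" "A \<subseteq> B"
  shows "fst (x A) \<le> fst (x B)"
proof -
  have "B = A \<union> (B - A)" using assms by auto
  hence "fst (x B) = fst (x A) + fst (x (B - A))"
    using obs_add[OF obs, of A "B - A"] assms by auto
  thus ?thesis using obs_range[OF obs, of "B - A"] assms by auto
qed


definition Qs :: "real^'n \<Rightarrow> (real^'n) set" where
  "Qs s = {y. \<forall>l. y$l < s$l}"

definition upd :: "real^'n \<Rightarrow> 'n \<Rightarrow> real \<Rightarrow> real^'n" where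
  "upd s j r = (\<chi> l. if l = j then r else s$l)"

definition slab :: "real^'n \<Rightarrow> 'n \<Rightarrow> ereal \<Rightarrow> real \<Rightarrow> (real^'n) set" where
  "slab s j a b = {y. (\<forall>l. l \<noteq> j \<longrightarrow> y$l < s$l) \<and> a \<le> ereal (y$j) \<and> y$j < b}"

lemma upd_nth [simp]: "upd s j r $ l = (if l = j then r else s$l)"
  unfolding upd_def by simp

lemma upd_same: "upd s j (s$j) = s"
  by (simp add: vec_eq_iff)

lemma Qs_alt: "Qs (upd s j c) = {y. y$j < c \<and> (\<forall>l. l \<noteq> j \<longrightarrow> y$l < s$l)}"
  unfolding Qs_def upd_nth by (auto split: if_splits)

lemma Qs_borel [measurable]: "Qs s \<in> sets borel"
  unfolding Qs_def by measurable

lemma slab_borel [measurable]: "slab s j a b \<in> sets borel"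
  unfolding slab_def by measurable

lemma Tset_iff: "t \<in> Tset x i \<longleftrightarrow> fst (x (Qs t)) = i"
  unfolding Tset_def distr_fun_def Qs_def by simp

lemma key:
  fixes x :: "(real^'n::finite) set \<Rightarrow> int \<times> 'g::lattice_ab_group_add"
  assumes obs: "observable k x" and i1: "1 \<le> i" and sT: "s \<in> Tset x i"
    and a: "a < Inf (ereal ` {r. upd s j r \<in> Tset x i}) \<or> a = -\<infinity>"
    and b: "Inf (ereal ` {r. upd s j r \<in> Tset x i}) < ereal b"
  shows "1 \<le> fst (x (slab s j a b))"
proof -
  define R where "R = {r. upd s j r \<in> Tset x i}"
  define v where "v = Inf (ereal ` R)"
  obtain r where rR: "r \<in> R" and rb: "ereal r < ereal b"
    using b unfolding R_def Inf_less_iff by auto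
  have "Qs (upd s j r) \<subseteq> Qs (upd s j b)"
    using rb unfolding Qs_def by auto
  hence Qb: "i \<le> fst (x (Qs (upd s j b)))"
    using obs_mono[OF obs] rR unfolding R_def Tset_iff by fastforce
  show ?thesis
  proof (cases "a = -\<infinity>")
    case True
    hence "slab s j a b = Qs (upd s j b)" unfolding slab_def Qs_def by auto
    thus ?thesis using Qb i1 by simp
  next
    case False
    hence av: "a < v" using a unfolding v_def R_def by auto
    then obtain a' where a': "a = ereal a'" using False
      by (cases a) auto
    have a'R: "a' \<notin> R"
    proof
      assume "a' \<in> R"
      hence "v \<le> ereal a'" unfolding v_def by (simp add: Inf_lower)
      thus False using av a' by simp
    qed
    have "s$j \<in> R" using sT unfolding R_def by (simp add: upd_same)
    hence vle: "v \<le> ereal (s$j)" unfolding v_def by (simp add: Inf_lower)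
    have "ereal a' < ereal (s$j)" using less_le_trans[OF av vle] a' by simp
    hence a's: "a' < s$j" by simp
    have "Qs (upd s j a') \<subseteq> Qs s"
    proof
      fix y assume "y \<in> Qs (upd s j a')"
      hence y1: "y$j < a'" and y2: "\<forall>l. l \<noteq> j \<longrightarrow> y$l < s$l" unfolding Qs_alt by auto
      show "y \<in> Qs s" unfolding Qs_def
      proof (intro CollectI allI)
        fix l show "y$l < s$l" using y1 y2 a's by (cases "l = j") auto
      qed
    qed
    hence "fst (x (Qs (upd s j a'))) \<le> i"
      using obs_mono[OF obs] sT unfolding Tset_iff by fastforce
    moreover have "fst (x (Qs (upd s j a'))) \<noteq> i" using a'R unfolding R_def Tset_iff by simp
    ultimately have lt: "fst (x (Qs (upd s j a'))) < i" by simp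
    have "a < ereal b" using av b unfolding v_def R_def by (rule less_trans)
    hence "ereal a' < ereal b" using a' by simp
    hence a'b: "a' < b" by simp
    have "Qs (upd s j b) = Qs (upd s j a') \<union> slab s j a b"
      using a' a'b unfolding Qs_alt slab_def by auto
    moreover have "Qs (upd s j a') \<inter> slab s j a b = {}"
      using a' unfolding Qs_def slab_def by auto
    ultimately have "fst (x (Qs (upd s j b))) = fst (x (Qs (upd s j a'))) + fst (x (slab s j a b))"
      using obs_add[OF obs, of "Qs (upd s j a')" "slab s j a b"] by simp
    thus ?thesis using lt Qb by simp
  qed
qed



lemma count:
  fixes x :: "(real^'n::finite) set \<Rightarrow> int \<times> 'g::lattice_ab_group_add"
  assumes obs: "observable k x" and i1: "1 \<le> i"
  shows "finite W \<Longrightarrow> W \<subseteq> (\<lambda>s. Inf (ereal ` {r. upd s j r \<in> Tset x i})) ` Tset x i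
    \<Longrightarrow> card W = N \<Longrightarrow> (\<forall>w\<in>W. w < ereal b)
    \<Longrightarrow> \<exists>S. (\<forall>m. S m \<in> sets borel) \<and> disjoint_family S \<and> (\<forall>m<N. 1 \<le> fst (x (S m)))
          \<and> (\<forall>m. S m \<subseteq> {y. y$j < b})"
proof (induction N arbitrary: W b)
  case 0
  show ?case by (rule exI[of _ "\<lambda>_. {}"]) (auto simp: disjoint_family_on_def)
next
  case (Suc N)
  define V where "V = (\<lambda>s. Inf (ereal ` {r. upd s j r \<in> Tset x i})) ` Tset x i"
  have fW: "finite W" and WV: "W \<subseteq> V" and cW: "card W = Suc N" and Wb: "\<forall>w\<in>W. w < ereal b"
    using Suc.prems unfolding V_def by auto
  have Wne: "W \<noteq> {}" using cW by auto
  define w where "w = Max W"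
  have wW: "w \<in> W" unfolding w_def using fW Wne by simp
  define W' where "W' = W - {w}"
  have fW': "finite W'" unfolding W'_def using fW by simp
  have W'V: "W' \<subseteq> V" unfolding W'_def using WV by blast
  have cW': "card W' = N" unfolding W'_def using fW cW wW by simp
  obtain s where sT: "s \<in> Tset x i" and ws: "w = Inf (ereal ` {r. upd s j r \<in> Tset x i})"
    using wW WV unfolding V_def by auto
  have wb: "w < ereal b" using Wb wW by auto
  show ?case
  proof (cases "W' = {}")
    case True
    hence N0: "N = 0" using cW' by simp
    define S where "S = (\<lambda>m::nat. if m = 0 then slab s j (-\<infinity>) b else {})"
    have "\<forall>m. S m \<in> sets borel" unfolding S_def by simp
    moreover have "disjoint_family S" unfolding S_def disjoint_family_on_def by auto
    moreover have "\<forall>m<Suc N. 1 \<le> fst (x (S m))"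
    proof (intro allI impI)
      fix m assume "m < Suc N"
      hence "m = 0" using N0 by simp
      thus "1 \<le> fst (x (S m))" unfolding S_def using key[OF obs i1 sT, of "-\<infinity>" j b] ws wb by simp
    qed
    moreover have "\<forall>m. S m \<subseteq> {y. y$j < b}" unfolding S_def slab_def by auto
    ultimately show ?thesis by blast
  next
    case False
    have "Max W' \<in> W'" using fW' False by simp
    hence "Max W' \<in> W" "Max W' \<noteq> w" unfolding W'_def by auto
    hence "Max W' < w" unfolding w_def using fW by (simp add: order_le_neq_trans)
    then obtain c where c1: "Max W' < ereal c" and c2: "ereal c < w" using ereal_dense2 by blast
    have W'c: "\<forall>w'\<in>W'. w' < ereal c" using c1 fW' by (meson Max_ge le_less_trans)
    obtain S' where S'b: "\<forall>m. S' m \<in> sets borel" and S'd: "disjoint_family S'"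
      and S'1: "\<forall>m<N. 1 \<le> fst (x (S' m))" and S's: "\<forall>m. S' m \<subseteq> {y. y$j < c}"
    proof -
      have W'V0: "W' \<subseteq> (\<lambda>s. Inf (ereal ` {r. upd s j r \<in> Tset x i})) ` Tset x i"
        using W'V unfolding V_def .
      show ?thesis using Suc.IH[OF fW' W'V0 cW' W'c] that by blast
    qed
    define S where "S = S'(N := slab s j (ereal c) b)"
    have "ereal c < ereal b" using c2 wb by (rule less_trans)
    hence cb: "c < b" by simp
    have "\<forall>m. S m \<in> sets borel" unfolding S_def using S'b by simp
    moreover have "disjoint_family S" unfolding disjoint_family_on_def
    proof (intro ballI impI)
      fix m n :: nat assume mn: "m \<noteq> n"
      have sl: "slab s j (ereal c) b \<inter> S' l = {}" for l
        using S's[rule_format, of l] unfolding slab_def by auto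
      show "S m \<inter> S n = {}"
      proof (cases "m = N")
        case True thus ?thesis using mn sl unfolding S_def by simp
      next
        case False
        show ?thesis
        proof (cases "n = N")
          case True thus ?thesis using mn sl False unfolding S_def by (simp add: Int_commute)
        next
          case False2: False
          thus ?thesis using False mn S'd unfolding S_def disjoint_family_on_def by simp
        qed
      qed
    qed
    moreover have "\<forall>m<Suc N. 1 \<le> fst (x (S m))"
    proof (intro allI impI)
      fix m assume "m < Suc N"
      show "1 \<le> fst (x (S m))"
      proof (cases "m = N")
        case True
        thus ?thesis unfolding S_def using key[OF obs i1 sT, of "ereal c" j b] ws wb c2 by simp
      next
        case False
        thus ?thesis using S'1 \<open>m < Suc N\<close> unfolding S_def by simp
      qed
    qed
    moreover have "\<forall>m. S m \<subseteq> {y. y$j < b}"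
    proof
      fix m
      show "S m \<subseteq> {y. y$j < b}"
      proof (cases "m = N")
        case True thus ?thesis unfolding S_def slab_def by auto
      next
        case False
        have "S' m \<subseteq> {y. y$j < c}" using S's by blast
        also have "\<dots> \<subseteq> {y. y$j < b}" using cb by auto
        finally show ?thesis using False unfolding S_def by simp
      qed
    qed
    ultimately show ?thesis by blast
  qed
qed


lemma finite_V:
  fixes x :: "(real^'n::finite) set \<Rightarrow> int \<times> 'g::lattice_ab_group_add"
  assumes obs: "observable k x" and i1: "1 \<le> i"
  shows "finite ((\<lambda>s. Inf (ereal ` {r. upd s j r \<in> Tset x i})) ` Tset x i)"
proof (rule ccontr)
  define V where "V = (\<lambda>s. Inf (ereal ` {r. upd s j r \<in> Tset x i})) ` Tset x i"
  assume "infinite ((\<lambda>s. Inf (ereal ` {r. upd s j r \<in> Tset x i})) ` Tset x i)"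
  hence inf: "infinite V" unfolding V_def .
  have "x UNIV = (k, 0)" using obs unfolding observable_def by (elim conjE)
  hence k0: "0 \<le> k" using obs_range[OF obs, of UNIV] by simp
  define N where "N = nat (k + 1)"
  obtain W where WV: "W \<subseteq> V" and fW: "finite W" and cW: "card W = N"
    using infinite_arbitrarily_large[OF inf] by blast
  have Wne: "W \<noteq> {}" using cW k0 unfolding N_def by auto
  have Vfin: "v < \<infinity>" if vV: "v \<in> V" for v
  proof -
    obtain s where sT: "s \<in> Tset x i" and vs: "v = Inf (ereal ` {r. upd s j r \<in> Tset x i})"
      using vV unfolding V_def by blast
    have "s$j \<in> {r. upd s j r \<in> Tset x i}" using sT by (simp add: upd_same)
    hence "v \<le> ereal (s$j)" unfolding vs by (simp add: Inf_lower)
    thus ?thesis by (cases v) auto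
  qed
  have "Max W \<in> W" using fW Wne by simp
  hence "Max W < \<infinity>" using Vfin WV by blast
  then obtain b where b: "Max W < ereal b" using ereal_dense2 by blast
  have Wb: "\<forall>w\<in>W. w < ereal b" using b fW by (meson Max_ge le_less_trans)
  have WV0: "W \<subseteq> (\<lambda>s. Inf (ereal ` {r. upd s j r \<in> Tset x i})) ` Tset x i" using WV unfolding V_def .
  obtain S where Sb: "\<forall>m. S m \<in> sets borel" and Sd: "disjoint_family S"
    and S1: "\<forall>m<N. 1 \<le> fst (x (S m))"
    using count[OF obs i1 fW WV0 cW Wb] by blast
  have "summable_M k (\<lambda>m. x (S m))" using obsD[OF obs Sb Sd] by (rule conjunct1)
  hence "inM k (gsum (\<lambda>m. x (S m)) {..<N})" unfolding summable_M_def by blast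
  hence "fst (gsum (\<lambda>m. x (S m)) {..<N}) \<le> k" using inM_fst by blast
  hence "(\<Sum>m<N. fst (x (S m))) \<le> k" by (simp add: gsum_def)
  moreover have "(\<Sum>m<N. (1::int)) \<le> (\<Sum>m<N. fst (x (S m)))"
    by (rule sum_mono) (use S1 in auto)
  moreover have "(\<Sum>m<N. (1::int)) = k + 1" unfolding N_def using k0 by simp
  ultimately show False by linarith
qed

theorem lemma4p1:
  fixes k :: int and i :: int
    and x :: "(real^'n::finite) set \<Rightarrow> int \<times> 'g::lattice_ab_group_add"
  assumes "k \<ge> 1"
    and "dedekind_sigma_complete TYPE('g)"
    and "observable k x"
    and "i \<in> {1..k}" and "Tset x i \<noteq> {}"
    and "\<forall>j\<in>{1..<i}. Tset x j = {}"
  shows "finite (char_points x i)"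
proof -
  have obs: "observable k x" and i1: "1 \<le> i" using assms by auto
  define V where "V = (\<lambda>j. (\<lambda>s. Inf (ereal ` {r. upd s j r \<in> Tset x i})) ` Tset x i)"
  have fin: "finite (PiE UNIV V)"
    by (rule finite_PiE) (auto simp: V_def intro: finite_V[OF obs i1])
  have "char_points x i \<subseteq> (\<lambda>f. \<chi> j. f j) ` (PiE UNIV V)"
  proof
    fix p assume "p \<in> char_points x i"
    then obtain s where sT: "s \<in> Tset x i" and ps: "p = char_proj x i s"
      unfolding char_points_def by blast
    have pj: "p $ j = Inf (ereal ` {r. upd s j r \<in> Tset x i})" for j
      unfolding ps char_proj_def upd_def by simp
    have "(\<lambda>j. p $ j) \<in> PiE UNIV V" unfolding V_def using pj sT by auto
    moreover have "p = (\<chi> j. (\<lambda>j. p $ j) j)" by simp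
    ultimately show "p \<in> (\<lambda>f. \<chi> j. f j) ` (PiE UNIV V)" by blast
  qed
  thus ?thesis using fin finite_subset by blast
qed


end
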